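(* Let $m,n\geq 0$ and let $L^2(\mathbb{R}^{m|n}):=L^2(\mathbb{R}^m)\otimes\bigwedge\mathbb{R}^n$. Elements are written $f(x,\xi)=\sum_I f_I(x)\xi^I$ with $f_I\in L^2(\mathbb{R}^m)$, and $f$ has degree $|I|\bmod 2$ when $f=f_I\xi^I$. Equip this space with the inner product $$\langle f_1,f_2\rangle=\int_{\mathbb{R}^{m|n}}dx\,d\xi\ \overline{f_1(x,\xi)}\,f_2(x,\xi),$$ where $\overline{f(x,\xi)}:=\sum_I\overline{f_I(x)}\xi^I$. Then $L^2(\mathbb{R}^{m|n})$ is a Hilbert superspace of parity $n \bmod 2$. A fundamental symmetry is given by $$J(f)(x,\xi)=\sum_I \epsilon(I,\complement I)\,f_I(x)\,\xi^{\complement I},$$ where $\complement I$ is the complement of $I$ in $\{1,\dots,n\}$.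
   Context: Let $\xi^1,\dots,\xi^n$ be the canonical basis of $\mathbb{R}^n$ viewed as generators of $\bigwedge\mathbb{R}^n$. For an ordered subset $I=\{i_1<\dots<i_k\}\subseteq\{1,\dots,n\}$ set $\xi^I=\xi^{i_1}\cdots\xi^{i_k}$, with $\xi^\emptyset=1$. For subsets $I,J$, $\epsilon(I,J)$ is $0$ if $I\cap J\neq\emptyset$. Otherwise it is the sign of the permutation putting the list $(i_1,\dots,i_k,j_1,\dots,j_\ell)$ in increasing order. Hence $\xi^I\xi^J=\epsilon(I,J)\xi^{I\cup J}$. The Berezin integral of $f=\sum_I f_I(x)\xi^I$ is $\int_{\mathbb{R}^{m|n}}dx\,d\xi\,f:=\int_{\mathbb{R}^m}f_{\{1,\dots,n\}}(x)\,dx$. A Hilbert superspace of parity $n\in\mathbb{Z}_2$ is a complex $\mathbb{Z}_2$-graded vector space $\mathcal{H}$ with a superhermitian inner product $\langle-,-\rangle$, meaning $\overline{\langle x,y\rangle}=(-1)^{|x||y|}\langle y,x\rangle$. The inner product is sesquilinear and homogeneous of degree $n$. There must exist a fundamental symmetry, i.e. an endomorphism $J$ homogeneous of degree $n$ such that, for all homogeneous $x,y$: - $J^2(x)=(-1)^{(n+1)|x|}x$; - $\langle J x,Jy\rangle=\langle x,y\rangle$; - $(x,y)_J:=\langle x,J(y)\rangle$ is a hermitian positive definite scalar product for which $\mathcal{H}$ is complete. *)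

theory Defs
  imports "HOL-Analysis.Analysis" "HOL-Probability.Probability"
begin

definition cvs :: "'v set \<Rightarrow> 'v \<Rightarrow> ('v \<Rightarrow> 'v \<Rightarrow> 'v) \<Rightarrow> (complex \<Rightarrow> 'v \<Rightarrow> 'v) \<Rightarrow> bool" where
  "cvs V z add sm \<longleftrightarrow>
     z \<in> V \<and> (\<forall>x\<in>V. \<forall>y\<in>V. add x y \<in> V) \<and> (\<forall>c. \<forall>x\<in>V. sm c x \<in> V) \<and>
     (\<forall>x\<in>V. \<forall>y\<in>V. \<forall>w\<in>V. add (add x y) w = add x (add y w)) \<and>
     (\<forall>x\<in>V. \<forall>y\<in>V. add x y = add y x) \<and>
     (\<forall>x\<in>V. add z x = x) \<and>
     (\<forall>x\<in>V. add x (sm (-1) x) = z) \<and>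
     (\<forall>c. \<forall>x\<in>V. \<forall>y\<in>V. sm c (add x y) = add (sm c x) (sm c y)) \<and>
     (\<forall>a b. \<forall>x\<in>V. sm (a + b) x = add (sm a x) (sm b x)) \<and>
     (\<forall>a b. \<forall>x\<in>V. sm a (sm b x) = sm (a * b) x) \<and>
     (\<forall>x\<in>V. sm 1 x = x)"

definition subspace_of :: "'v set \<Rightarrow> 'v set \<Rightarrow> 'v \<Rightarrow> ('v \<Rightarrow> 'v \<Rightarrow> 'v) \<Rightarrow> (complex \<Rightarrow> 'v \<Rightarrow> 'v) \<Rightarrow> bool" where
  "subspace_of W V z add sm \<longleftrightarrow> W \<subseteq> V \<and> z \<in> W \<and>
     (\<forall>x\<in>W. \<forall>y\<in>W. add x y \<in> W) \<and> (\<forall>c. \<forall>x\<in>W. sm c x \<in> W)"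

definition graded_cvs :: "'v set \<Rightarrow> 'v set \<Rightarrow> 'v set \<Rightarrow> 'v \<Rightarrow> ('v \<Rightarrow> 'v \<Rightarrow> 'v) \<Rightarrow> (complex \<Rightarrow> 'v \<Rightarrow> 'v) \<Rightarrow> bool" where
  "graded_cvs V V0 V1 z add sm \<longleftrightarrow> cvs V z add sm \<and>
     subspace_of V0 V z add sm \<and> subspace_of V1 V z add sm \<and> V0 \<inter> V1 = {z} \<and>
     (\<forall>x\<in>V. \<exists>a\<in>V0. \<exists>b\<in>V1. x = add a b)"

text \<open>Degree of a homogeneous element (the zero vector is given degree 0).\<close>
definition deg :: "'v set \<Rightarrow> 'v \<Rightarrow> nat" where
  "deg V0 x = (if x \<in> V0 then 0 else 1)"

definition hpart :: "'v set \<Rightarrow> 'v set \<Rightarrow> nat \<Rightarrow> 'v set" where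
  "hpart V0 V1 d = (if even d then V0 else V1)"

definition sesquilinear :: "'v set \<Rightarrow> ('v \<Rightarrow> 'v \<Rightarrow> 'v) \<Rightarrow> (complex \<Rightarrow> 'v \<Rightarrow> 'v) \<Rightarrow> ('v \<Rightarrow> 'v \<Rightarrow> complex) \<Rightarrow> bool" where
  "sesquilinear V add sm ip \<longleftrightarrow>
     (\<forall>x\<in>V. \<forall>y\<in>V. \<forall>w\<in>V. ip (add x y) w = ip x w + ip y w) \<and>
     (\<forall>x\<in>V. \<forall>y\<in>V. \<forall>w\<in>V. ip w (add x y) = ip w x + ip w y) \<and>
     (\<forall>c. \<forall>x\<in>V. \<forall>y\<in>V. ip (sm c x) y = cnj c * ip x y) \<and>
     (\<forall>c. \<forall>x\<in>V. \<forall>y\<in>V. ip x (sm c y) = c * ip x y)"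

definition fundamental_symmetry ::
  "'v set \<Rightarrow> 'v set \<Rightarrow> 'v set \<Rightarrow> 'v \<Rightarrow> ('v \<Rightarrow> 'v \<Rightarrow> 'v) \<Rightarrow> (complex \<Rightarrow> 'v \<Rightarrow> 'v)
    \<Rightarrow> ('v \<Rightarrow> 'v \<Rightarrow> complex) \<Rightarrow> nat \<Rightarrow> ('v \<Rightarrow> 'v) \<Rightarrow> bool" where
  "fundamental_symmetry V V0 V1 z add sm ip p J \<longleftrightarrow>
     \<comment> \<open>J is an endomorphism (complex linear map V \<rightarrow> V)\<close>
     (\<forall>x\<in>V. J x \<in> V) \<and>
     (\<forall>x\<in>V. \<forall>y\<in>V. J (add x y) = add (J x) (J y)) \<and>
     (\<forall>c. \<forall>x\<in>V. J (sm c x) = sm c (J x)) \<and>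
     \<comment> \<open>homogeneous of degree p\<close>
     (\<forall>d. \<forall>x\<in>hpart V0 V1 d. J x \<in> hpart V0 V1 (d + p)) \<and>
     \<comment> \<open>the three axioms\<close>
     (\<forall>x\<in>V0 \<union> V1. J (J x) = sm ((-1) ^ ((p + 1) * deg V0 x)) x) \<and>
     (\<forall>x\<in>V0 \<union> V1. \<forall>y\<in>V0 \<union> V1. ip (J x) (J y) = ip x y) \<and>
     \<comment> \<open>(x,y)_J := ip x (J y) is a hermitian positive definite scalar product ...\<close>
     (\<forall>x\<in>V. \<forall>y\<in>V. cnj (ip x (J y)) = ip y (J x)) \<and>
     (\<forall>x\<in>V. Im (ip x (J x)) = 0 \<and> Re (ip x (J x)) \<ge> 0 \<and> (ip x (J x) = 0 \<longrightarrow> x = z)) \<and>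
     \<comment> \<open>... for which V is complete\<close>
     (\<forall>s :: nat \<Rightarrow> 'v. (\<forall>k. s k \<in> V) \<and>
        (\<forall>e>0. \<exists>N. \<forall>i j. i \<ge> N \<longrightarrow> j \<ge> N \<longrightarrow>
            sqrt (Re (ip (add (s i) (sm (-1) (s j))) (J (add (s i) (sm (-1) (s j)))))) < e)
        \<longrightarrow> (\<exists>l\<in>V. (\<lambda>k. sqrt (Re (ip (add (s k) (sm (-1) l)) (J (add (s k) (sm (-1) l))))))
                      \<longlonglongrightarrow> 0))"

definition hilbert_superspace ::
  "'v set \<Rightarrow> 'v set \<Rightarrow> 'v set \<Rightarrow> 'v \<Rightarrow> ('v \<Rightarrow> 'v \<Rightarrow> 'v) \<Rightarrow> (complex \<Rightarrow> 'v \<Rightarrow> 'v)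
    \<Rightarrow> ('v \<Rightarrow> 'v \<Rightarrow> complex) \<Rightarrow> nat \<Rightarrow> bool" where
  "hilbert_superspace V V0 V1 z add sm ip p \<longleftrightarrow>
     graded_cvs V V0 V1 z add sm \<and> sesquilinear V add sm ip \<and>
     \<comment> \<open>homogeneous of degree p\<close>
     (\<forall>x\<in>V0 \<union> V1. \<forall>y\<in>V0 \<union> V1. ip x y \<noteq> 0 \<longrightarrow> (deg V0 x + deg V0 y) mod 2 = p mod 2) \<and>
     \<comment> \<open>superhermitian\<close>
     (\<forall>x\<in>V0 \<union> V1. \<forall>y\<in>V0 \<union> V1. cnj (ip x y) = (-1) ^ (deg V0 x * deg V0 y) * ip y x) \<and>
     (\<exists>J. fundamental_symmetry V V0 V1 z add sm ip p J)"

text \<open>epsilon(I,J): 0 if I, J intersect; otherwise the sign of the permutation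
 sorting (i_1..i_k, j_1..j_l), i.e. (-1)^(number of inversions (i,j), i in I, j in J, j < i).\<close>
definition eps :: "nat set \<Rightarrow> nat set \<Rightarrow> int" where
  "eps I K = (if I \<inter> K \<noteq> {} then 0 else (-1) ^ card {(i, j). i \<in> I \<and> j \<in> K \<and> j < i})"

text \<open>Superfunctions on R^{m|n} as coefficient families f = sum_I f_I(x) xi^I,
 indexed by subsets I of {1..n}. Points of R^m are functions nat => real on {..<m}.\<close>
type_synonym superfun = "nat set \<Rightarrow> (nat \<Rightarrow> real) \<Rightarrow> complex"

definition gmult :: "nat \<Rightarrow> superfun \<Rightarrow> superfun \<Rightarrow> superfun" where
  "gmult n f g = (\<lambda>K x. \<Sum>I\<in>Pow {1..n}. \<Sum>I'\<in>Pow {1..n}.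
      if I \<union> I' = K then of_int (eps I I') * f I x * g I' x else 0)"

definition sconj :: "superfun \<Rightarrow> superfun" where
  "sconj f = (\<lambda>I x. cnj (f I x))"

text \<open>Lebesgue (Borel) measure on R^m, m \<ge> 0 (for m = 0 a one-point probability space).\<close>
definition Rm :: "nat \<Rightarrow> (nat \<Rightarrow> real) measure" where
  "Rm m = PiM {..<m} (\<lambda>_. lborel)"

definition berezin :: "nat \<Rightarrow> nat \<Rightarrow> superfun \<Rightarrow> complex" where
  "berezin m n f = (\<integral>x. f {1..n} x \<partial>Rm m)"

definition sqint :: "nat \<Rightarrow> ((nat \<Rightarrow> real) \<Rightarrow> complex) \<Rightarrow> bool" where
  "sqint m f \<longleftrightarrow> f \<in> borel_measurable (Rm m) \<and> integrable (Rm m) (\<lambda>x. (cmod (f x))\<^sup>2)"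

definition L2cls :: "nat \<Rightarrow> ((nat \<Rightarrow> real) \<Rightarrow> complex) \<Rightarrow> ((nat \<Rightarrow> real) \<Rightarrow> complex) set" where
  "L2cls m f = {g. sqint m g \<and> (AE x in Rm m. g x = f x)}"

definition L2 :: "nat \<Rightarrow> ((nat \<Rightarrow> real) \<Rightarrow> complex) set set" where
  "L2 m = {L2cls m f | f. sqint m f}"

definition rep :: "((nat \<Rightarrow> real) \<Rightarrow> complex) set \<Rightarrow> (nat \<Rightarrow> real) \<Rightarrow> complex" where
  "rep A = (SOME f. f \<in> A)"

type_synonym L2super = "nat set \<Rightarrow> ((nat \<Rightarrow> real) \<Rightarrow> complex) set"

definition L2zero :: "nat \<Rightarrow> L2super" where
  "L2zero m = (\<lambda>I. L2cls m (\<lambda>_. 0))"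

text \<open>L^2(R^{m|n}) = L^2(R^m) (x) \<Lambda>R^n: families (F_I) with F_I in L^2(R^m) for I \<subseteq> {1..n}.\<close>
definition L2s :: "nat \<Rightarrow> nat \<Rightarrow> L2super set" where
  "L2s m n = {F. (\<forall>I. I \<subseteq> {1..n} \<longrightarrow> F I \<in> L2 m) \<and> (\<forall>I. \<not> I \<subseteq> {1..n} \<longrightarrow> F I = L2zero m I)}"

definition L2even :: "nat \<Rightarrow> nat \<Rightarrow> L2super set" where
  "L2even m n = {F \<in> L2s m n. \<forall>I. odd (card I) \<longrightarrow> F I = L2zero m I}"

definition L2odd :: "nat \<Rightarrow> nat \<Rightarrow> L2super set" where
  "L2odd m n = {F \<in> L2s m n. \<forall>I. even (card I) \<longrightarrow> F I = L2zero m I}"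

definition L2add :: "nat \<Rightarrow> L2super \<Rightarrow> L2super \<Rightarrow> L2super" where
  "L2add m F G = (\<lambda>I. L2cls m (\<lambda>x. rep (F I) x + rep (G I) x))"

definition L2smul :: "nat \<Rightarrow> complex \<Rightarrow> L2super \<Rightarrow> L2super" where
  "L2smul m c F = (\<lambda>I. L2cls m (\<lambda>x. c * rep (F I) x))"

definition L2ip :: "nat \<Rightarrow> nat \<Rightarrow> L2super \<Rightarrow> L2super \<Rightarrow> complex" where
  "L2ip m n F G = berezin m n (gmult n (sconj (\<lambda>I. rep (F I))) (\<lambda>I. rep (G I)))"

text \<open>J(f) = sum_I eps(I, \<complement>I) f_I xi^{\<complement>I}; its coefficient at K is eps(\<complement>K, K) f_{\<complement>K}.\<close>
definition L2J :: "nat \<Rightarrow> nat \<Rightarrow> L2super \<Rightarrow> L2super" where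
  "L2J m n F = (\<lambda>K. if K \<subseteq> {1..n}
      then L2cls m (\<lambda>x. of_int (eps ({1..n} - K) K) * rep (F ({1..n} - K)) x)
      else L2zero m K)"

end

theory Submission
  imports Defs
begin

lemma borel_measurable_cnj'[measurable (raw)]:
  "f \<in> borel_measurable M \<Longrightarrow> (\<lambda>x. cnj (f x)) \<in> borel_measurable M"
  by (rule borel_measurable_continuous_on[OF continuous_on_cnj[OF continuous_on_id]])

lemma sqint_meas: "sqint m f \<Longrightarrow> f \<in> borel_measurable (Rm m)"
  by (simp add: sqint_def)

lemma sqint_int: "sqint m f \<Longrightarrow> integrable (Rm m) (\<lambda>x. (cmod (f x))\<^sup>2)"
  by (simp add: sqint_def)

lemma sqint_zero: "sqint m (\<lambda>_. 0)"
  by (simp add: sqint_def)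

lemma sqint_add:
  assumes "sqint m f" "sqint m g" shows "sqint m (\<lambda>x. f x + g x)"
proof -
  have [measurable]: "f \<in> borel_measurable (Rm m)" "g \<in> borel_measurable (Rm m)"
    using assms by (auto simp: sqint_def)
  have i: "integrable (Rm m) (\<lambda>x. 2 * (cmod (f x))\<^sup>2 + 2 * (cmod (g x))\<^sup>2)"
    using assms by (auto simp: sqint_def)
  have "integrable (Rm m) (\<lambda>x. (cmod (f x + g x))\<^sup>2)"
  proof (rule Bochner_Integration.integrable_bound[OF i])
    show "(\<lambda>x. (cmod (f x + g x))\<^sup>2) \<in> borel_measurable (Rm m)" by measurable
    show "AE x in Rm m. norm ((cmod (f x + g x))\<^sup>2) \<le> norm (2 * (cmod (f x))\<^sup>2 + 2 * (cmod (g x))\<^sup>2)"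
    proof (rule AE_I2)
      fix x
      have "cmod (f x + g x) \<le> cmod (f x) + cmod (g x)" by (rule norm_triangle_ineq)
      hence "(cmod (f x + g x))\<^sup>2 \<le> (cmod (f x) + cmod (g x))\<^sup>2"
        by (simp add: power_mono)
      also have "\<dots> \<le> 2 * (cmod (f x))\<^sup>2 + 2 * (cmod (g x))\<^sup>2"
        using sum_squares_bound[of "cmod (f x)" "cmod (g x)"] by (simp add: power2_sum)
      finally show "norm ((cmod (f x + g x))\<^sup>2) \<le> norm (2 * (cmod (f x))\<^sup>2 + 2 * (cmod (g x))\<^sup>2)"
        by simp
    qed
  qed
  thus ?thesis by (simp add: sqint_def)
qed

lemma sqint_smul:
  assumes "sqint m f" shows "sqint m (\<lambda>x. c * f x)"
proof -
  have [measurable]: "f \<in> borel_measurable (Rm m)" using assms by (auto simp: sqint_def)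
  have "integrable (Rm m) (\<lambda>x. (cmod c)\<^sup>2 * (cmod (f x))\<^sup>2)"
    using assms by (auto simp: sqint_def)
  thus ?thesis by (simp add: sqint_def norm_mult power_mult_distrib)
qed

lemma sqint_prod:
  assumes "sqint m f" "sqint m g" shows "integrable (Rm m) (\<lambda>x. cnj (f x) * g x)"
proof -
  have [measurable]: "f \<in> borel_measurable (Rm m)" "g \<in> borel_measurable (Rm m)"
    using assms by (auto simp: sqint_def)
  have i: "integrable (Rm m) (\<lambda>x. (cmod (f x))\<^sup>2 + (cmod (g x))\<^sup>2)"
    using assms by (auto simp: sqint_def)
  show ?thesis
  proof (rule Bochner_Integration.integrable_bound[OF i])
    show "(\<lambda>x. cnj (f x) * g x) \<in> borel_measurable (Rm m)" by measurable
    show "AE x in Rm m. norm (cnj (f x) * g x) \<le> norm ((cmod (f x))\<^sup>2 + (cmod (g x))\<^sup>2)"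
    proof (rule AE_I2)
      fix x
      have "norm (cnj (f x) * g x) = cmod (f x) * cmod (g x)" by (simp add: norm_mult)
      also have "\<dots> \<le> (cmod (f x))\<^sup>2 + (cmod (g x))\<^sup>2"
        using sum_squares_bound[of "cmod (f x)" "cmod (g x)"] zero_le_power2[of "cmod (f x)"] zero_le_power2[of "cmod (g x)"] by linarith
      finally show "norm (cnj (f x) * g x) \<le> norm ((cmod (f x))\<^sup>2 + (cmod (g x))\<^sup>2)"
        by simp
    qed
  qed
qed

lemma L2cls_self: "sqint m f \<Longrightarrow> f \<in> L2cls m f"
  by (simp add: L2cls_def)

lemma L2cls_in: "sqint m f \<Longrightarrow> L2cls m f \<in> L2 m"
  by (auto simp: L2_def)

lemma L2cls_mem: "g \<in> L2cls m f \<Longrightarrow> sqint m g \<and> (AE x in Rm m. g x = f x)"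
  by (simp add: L2cls_def)

lemma rep_in: "A \<in> L2 m \<Longrightarrow> rep A \<in> A"
proof -
  assume "A \<in> L2 m"
  then obtain f where "A = L2cls m f" "sqint m f" by (auto simp: L2_def)
  hence "f \<in> A" by (simp add: L2cls_self)
  thus ?thesis unfolding rep_def by (rule someI[where P="\<lambda>f. f \<in> A"])
qed

lemma rep_sqint: "A \<in> L2 m \<Longrightarrow> sqint m (rep A)"
  using rep_in L2_def L2cls_mem by blast

lemma rep_cls: "sqint m f \<Longrightarrow> AE x in Rm m. rep (L2cls m f) x = f x"
  using rep_in[OF L2cls_in] L2cls_mem by blast

lemma L2cls_cong:
  assumes "AE x in Rm m. f x = g x" shows "L2cls m f = L2cls m g"
  using assms unfolding L2cls_def by (auto elim: AE_mp)

lemma cls_rep: "A \<in> L2 m \<Longrightarrow> L2cls m (rep A) = A"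
proof -
  assume "A \<in> L2 m"
  then obtain f where A: "A = L2cls m f" "sqint m f" by (auto simp: L2_def)
  have "AE x in Rm m. rep A x = f x" using A rep_cls by simp
  thus ?thesis using A L2cls_cong by metis
qed

lemma cls_eqI: "A \<in> L2 m \<Longrightarrow> AE x in Rm m. rep A x = f x \<Longrightarrow> L2cls m f = A"
  using cls_rep L2cls_cong by metis

lemma L2zero_in: "L2zero m I \<in> L2 m"
  by (simp add: L2zero_def L2cls_in sqint_zero)

lemma rep_zero: "AE x in Rm m. rep (L2zero m I) x = 0"
  unfolding L2zero_def using rep_cls[OF sqint_zero] .

lemma L2s_L2: "F \<in> L2s m n \<Longrightarrow> F I \<in> L2 m"
  unfolding L2s_def using L2zero_in by (cases "I \<subseteq> {1..n}") auto

lemma L2s_sq: "F \<in> L2s m n \<Longrightarrow> sqint m (rep (F I))"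
  using L2s_L2 rep_sqint by blast

lemma L2s_eqI:
  assumes "F \<in> L2s m n" "G \<in> L2s m n" "\<And>I. I \<subseteq> {1..n} \<Longrightarrow> AE x in Rm m. rep (F I) x = rep (G I) x"
  shows "F = G"
proof
  fix I show "F I = G I"
  proof (cases "I \<subseteq> {1..n}")
    case True
    have "F I = L2cls m (rep (F I))" using cls_rep[OF L2s_L2[OF assms(1)]] by simp
    also have "\<dots> = G I" by (rule cls_eqI[OF L2s_L2[OF assms(2)]]) (use assms(3)[OF True] in \<open>auto elim: AE_mp\<close>)
    finally show ?thesis .
  next
    case False thus ?thesis using assms(1,2) by (simp add: L2s_def)
  qed
qed

lemma L2s_zeroI:
  assumes "F \<in> L2s m n" "AE x in Rm m. rep (F I) x = 0" shows "F I = L2zero m I"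
  unfolding L2zero_def using cls_eqI[OF L2s_L2[OF assms(1)] assms(2)] by simp


lemma add_rep: "F I \<in> L2 m \<Longrightarrow> G I \<in> L2 m \<Longrightarrow>
   AE x in Rm m. rep (L2add m F G I) x = rep (F I) x + rep (G I) x"
  unfolding L2add_def by (rule rep_cls[OF sqint_add[OF rep_sqint rep_sqint]])

lemma smul_rep: "F I \<in> L2 m \<Longrightarrow> AE x in Rm m. rep (L2smul m c F I) x = c * rep (F I) x"
  unfolding L2smul_def by (rule rep_cls[OF sqint_smul[OF rep_sqint]])

lemma add_L2: "F I \<in> L2 m \<Longrightarrow> G I \<in> L2 m \<Longrightarrow> L2add m F G I \<in> L2 m"
  unfolding L2add_def by (rule L2cls_in[OF sqint_add[OF rep_sqint rep_sqint]])

lemma smul_L2: "F I \<in> L2 m \<Longrightarrow> L2smul m c F I \<in> L2 m"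
  unfolding L2smul_def by (rule L2cls_in[OF sqint_smul[OF rep_sqint]])

lemma L2cls_zeroI: "AE x in Rm m. f x = 0 \<Longrightarrow> L2cls m f = L2zero m I"
  unfolding L2zero_def by (rule L2cls_cong)

lemma add_zero_coef: "F I = L2zero m I \<Longrightarrow> G I = L2zero m I \<Longrightarrow> L2add m F G I = L2zero m I"
  unfolding L2add_def
  by (rule L2cls_zeroI) (use rep_zero[of m I] in \<open>auto elim: AE_mp\<close>)

lemma smul_zero_coef: "F I = L2zero m I \<Longrightarrow> L2smul m c F I = L2zero m I"
  unfolding L2smul_def
  by (rule L2cls_zeroI) (use rep_zero[of m I] in \<open>auto elim: AE_mp\<close>)

lemma L2zero_L2s: "L2zero m \<in> L2s m n"
  by (simp add: L2s_def L2zero_in)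

lemma add_L2s: "F \<in> L2s m n \<Longrightarrow> G \<in> L2s m n \<Longrightarrow> L2add m F G \<in> L2s m n"
proof -
  assume F: "F \<in> L2s m n" and G: "G \<in> L2s m n"
  have "L2add m F G I \<in> L2 m" for I by (rule add_L2[OF L2s_L2[OF F] L2s_L2[OF G]])
  moreover have "L2add m F G I = L2zero m I" if "\<not> I \<subseteq> {1..n}" for I
    using F G that by (intro add_zero_coef) (auto simp: L2s_def)
  ultimately show ?thesis by (simp add: L2s_def)
qed

lemma smul_L2s: "F \<in> L2s m n \<Longrightarrow> L2smul m c F \<in> L2s m n"
proof -
  assume F: "F \<in> L2s m n"
  have "L2smul m c F I \<in> L2 m" for I by (rule smul_L2[OF L2s_L2[OF F]])
  moreover have "L2smul m c F I = L2zero m I" if "\<not> I \<subseteq> {1..n}" for I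
    using F that by (intro smul_zero_coef) (auto simp: L2s_def)
  ultimately show ?thesis by (simp add: L2s_def)
qed

lemma addr: "F \<in> L2s m n \<Longrightarrow> G \<in> L2s m n \<Longrightarrow>
   AE x in Rm m. rep (L2add m F G I) x = rep (F I) x + rep (G I) x"
  by (rule add_rep[OF L2s_L2 L2s_L2])

lemma smulr: "F \<in> L2s m n \<Longrightarrow> AE x in Rm m. rep (L2smul m c F I) x = c * rep (F I) x"
  by (rule smul_rep[OF L2s_L2])

lemma cvs_L2: "cvs (L2s m n) (L2zero m) (L2add m) (L2smul m)"
proof -
  have Z: "L2zero m \<in> L2s m n" by (rule L2zero_L2s)
  have a: "L2add m (L2add m x y) w = L2add m x (L2add m y w)"
    if h: "x \<in> L2s m n" "y \<in> L2s m n" "w \<in> L2s m n" for x y w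
  proof (rule L2s_eqI[of _ m n])
    fix I
    from addr[OF add_L2s[OF h(1,2)] h(3), of I] addr[OF h(1,2), of I]
      addr[OF h(1) add_L2s[OF h(2,3)], of I] addr[OF h(2,3), of I]
    show "AE t in Rm m. rep (L2add m (L2add m x y) w I) t = rep (L2add m x (L2add m y w) I) t"
      by eventually_elim simp
  qed (use h in \<open>simp_all add: add_L2s\<close>)
  have b: "L2add m x y = L2add m y x" for x y
    unfolding L2add_def by (simp add: add.commute)
  have c: "L2add m (L2zero m) x = x" if h: "x \<in> L2s m n" for x
  proof (rule L2s_eqI[of _ m n])
    fix I
    from addr[OF Z h, of I] rep_zero[of m I]
    show "AE xa in Rm m. rep (L2add m (L2zero m) x I) xa = rep (x I) xa"
      by eventually_elim simp
  qed (use h Z in \<open>simp_all add: add_L2s\<close>)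
  have d: "L2add m x (L2smul m (-1) x) = L2zero m" if h: "x \<in> L2s m n" for x
  proof (rule L2s_eqI[of _ m n])
    fix I
    from addr[OF h smul_L2s[OF h, of "-1"], of I] smulr[OF h, of "-1" I] rep_zero[of m I]
    show "AE xa in Rm m. rep (L2add m x (L2smul m (-1) x) I) xa = rep (L2zero m I) xa"
      by eventually_elim simp
  qed (use h Z in \<open>simp_all add: add_L2s smul_L2s\<close>)
  have e: "L2smul m c (L2add m x y) = L2add m (L2smul m c x) (L2smul m c y)"
    if h: "x \<in> L2s m n" "y \<in> L2s m n" for x y c
  proof (rule L2s_eqI[of _ m n])
    fix I
    from addr[OF h, of I] smulr[OF add_L2s[OF h], of c I] smulr[OF h(1), of c I] smulr[OF h(2), of c I]
      addr[OF smul_L2s[OF h(1), of c] smul_L2s[OF h(2), of c], of I]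
    show "AE xa in Rm m. rep (L2smul m c (L2add m x y) I) xa = rep (L2add m (L2smul m c x) (L2smul m c y) I) xa"
      by eventually_elim (simp add: algebra_simps)
  qed (use h in \<open>simp_all add: add_L2s smul_L2s\<close>)
  have f: "L2smul m (a + b) x = L2add m (L2smul m a x) (L2smul m b x)"
    if h: "x \<in> L2s m n" for x a b
  proof (rule L2s_eqI[of _ m n])
    fix I
    from smulr[OF h, of "a+b" I] smulr[OF h, of a I] smulr[OF h, of b I]
      addr[OF smul_L2s[OF h, of a] smul_L2s[OF h, of b], of I]
    show "AE xa in Rm m. rep (L2smul m (a + b) x I) xa = rep (L2add m (L2smul m a x) (L2smul m b x) I) xa"
      by eventually_elim (simp add: algebra_simps)
  qed (use h in \<open>simp_all add: add_L2s smul_L2s\<close>)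
  have g: "L2smul m a (L2smul m b x) = L2smul m (a * b) x"
    if h: "x \<in> L2s m n" for x a b
  proof (rule L2s_eqI[of _ m n])
    fix I
    from smulr[OF h, of "a*b" I] smulr[OF h, of b I] smulr[OF smul_L2s[OF h, of b], of a I]
    show "AE xa in Rm m. rep (L2smul m a (L2smul m b x) I) xa = rep (L2smul m (a * b) x I) xa"
      by eventually_elim (simp add: algebra_simps)
  qed (use h in \<open>simp_all add: smul_L2s\<close>)
  have k: "L2smul m 1 x = x" if h: "x \<in> L2s m n" for x
  proof (rule L2s_eqI[of _ m n])
    fix I
    from smulr[OF h, of 1 I]
    show "AE xa in Rm m. rep (L2smul m 1 x I) xa = rep (x I) xa"
      by eventually_elim simp
  qed (use h in \<open>simp_all add: smul_L2s\<close>)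
  show ?thesis unfolding cvs_def
    by (intro conjI ballI allI; (rule a b c d e f g k L2zero_L2s add_L2s smul_L2s; assumption)?)
qed


lemma sub_even: "subspace_of (L2even m n) (L2s m n) (L2zero m) (L2add m) (L2smul m)"
  unfolding subspace_of_def L2even_def
  by (auto simp: L2zero_L2s add_L2s smul_L2s add_zero_coef smul_zero_coef)

lemma sub_odd: "subspace_of (L2odd m n) (L2s m n) (L2zero m) (L2add m) (L2smul m)"
  unfolding subspace_of_def L2odd_def
  by (auto simp: L2zero_L2s add_L2s smul_L2s add_zero_coef smul_zero_coef)

lemma even_odd_int: "L2even m n \<inter> L2odd m n = {L2zero m}"
proof
  show "L2even m n \<inter> L2odd m n \<subseteq> {L2zero m}"
  proof
    fix x assume "x \<in> L2even m n \<inter> L2odd m n"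
    hence "x I = L2zero m I" for I by (cases "even (card I)") (auto simp: L2even_def L2odd_def)
    thus "x \<in> {L2zero m}" by auto
  qed
qed (simp add: L2even_def L2odd_def L2zero_L2s)

lemma decomp:
  assumes x: "x \<in> L2s m n"
  shows "\<exists>a\<in>L2even m n. \<exists>b\<in>L2odd m n. x = L2add m a b"
proof -
  define a where "a = (\<lambda>I. if even (card I) then x I else L2zero m I)"
  define b where "b = (\<lambda>I. if odd (card I) then x I else L2zero m I)"
  have aS: "a \<in> L2s m n" using x unfolding a_def L2s_def by (auto simp: L2zero_in)
  have bS: "b \<in> L2s m n" using x unfolding b_def L2s_def by (auto simp: L2zero_in)
  have "a \<in> L2even m n" using aS by (simp add: L2even_def a_def)
  moreover have "b \<in> L2odd m n" using bS by (simp add: L2odd_def b_def)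
  moreover have "x = L2add m a b"
  proof (rule L2s_eqI[OF x add_L2s[OF aS bS]])
    fix I
    show "AE t in Rm m. rep (x I) t = rep (L2add m a b I) t"
    proof (cases "even (card I)")
      case True
      from addr[OF aS bS, of I] rep_zero[of m I] show ?thesis
        by eventually_elim (simp add: a_def b_def True)
    next
      case False
      from addr[OF aS bS, of I] rep_zero[of m I] show ?thesis
        by eventually_elim (simp add: a_def b_def False)
    qed
  qed
  ultimately show ?thesis by blast
qed

lemma graded: "graded_cvs (L2s m n) (L2even m n) (L2odd m n) (L2zero m) (L2add m) (L2smul m)"
  unfolding graded_cvs_def using cvs_L2 sub_even sub_odd even_odd_int decomp by blast


definition ipc :: "nat \<Rightarrow> ((nat \<Rightarrow> real) \<Rightarrow> complex) \<Rightarrow> ((nat \<Rightarrow> real) \<Rightarrow> complex) \<Rightarrow> complex" where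
  "ipc m f g = (\<integral>x. cnj (f x) * g x \<partial>Rm m)"

lemma ipc_cong:
  assumes "sqint m f" "sqint m f'" "sqint m g" "sqint m g'"
    "AE x in Rm m. f x = f' x" "AE x in Rm m. g x = g' x"
  shows "ipc m f g = ipc m f' g'"
proof -
  have [measurable]: "f \<in> borel_measurable (Rm m)" "f' \<in> borel_measurable (Rm m)"
    "g \<in> borel_measurable (Rm m)" "g' \<in> borel_measurable (Rm m)"
    using assms by (auto simp: sqint_def)
  show ?thesis unfolding ipc_def
    by (rule integral_cong_AE) (use assms(5,6) in \<open>auto elim: AE_mp\<close>)
qed

lemma ipc_zero_l: "AE x in Rm m. f x = 0 \<Longrightarrow> ipc m f g = 0"
  unfolding ipc_def by (rule integral_eq_zero_AE) (auto elim: AE_mp)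

lemma ipc_zero_r: "AE x in Rm m. g x = 0 \<Longrightarrow> ipc m f g = 0"
  unfolding ipc_def by (rule integral_eq_zero_AE) (auto elim: AE_mp)

lemma ipc_add_l: "sqint m f \<Longrightarrow> sqint m g \<Longrightarrow> sqint m h \<Longrightarrow>
  ipc m (\<lambda>x. f x + g x) h = ipc m f h + ipc m g h"
  unfolding ipc_def using sqint_prod[of m f h] sqint_prod[of m g h]
  by (simp add: distrib_right)

lemma ipc_add_r: "sqint m f \<Longrightarrow> sqint m g \<Longrightarrow> sqint m h \<Longrightarrow>
  ipc m h (\<lambda>x. f x + g x) = ipc m h f + ipc m h g"
  unfolding ipc_def using sqint_prod[of m h f] sqint_prod[of m h g]
  by (simp add: distrib_left)

lemma ipc_smul_l: "ipc m (\<lambda>x. c * f x) g = cnj c * ipc m f g"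
  unfolding ipc_def by (simp add: mult.assoc)

lemma ipc_smul_r: "ipc m f (\<lambda>x. c * g x) = c * ipc m f g"
  unfolding ipc_def by (simp add: algebra_simps)

lemma ipc_cnj: "cnj (ipc m f g) = ipc m g f"
proof -
  have "cnj (ipc m f g) = (\<integral>x. cnj (cnj (f x) * g x) \<partial>Rm m)"
    unfolding ipc_def by (rule Bochner_Integration.integral_cnj[symmetric])
  also have "\<dots> = ipc m g f"
    unfolding ipc_def by (rule Bochner_Integration.integral_cong) (auto simp: mult.commute)
  finally show ?thesis .
qed

lemma ipc_self: "ipc m f f = of_real (\<integral>x. (cmod (f x))\<^sup>2 \<partial>Rm m)"
proof -
  have e: "cnj (f x) * f x = complex_of_real ((cmod (f x))\<^sup>2)" for x
    by (simp only: complex_norm_square mult.commute)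
  have "ipc m f f = (\<integral>x. complex_of_real ((cmod (f x))\<^sup>2) \<partial>Rm m)"
    unfolding ipc_def by (simp only: e)
  also have "\<dots> = of_real (\<integral>x. (cmod (f x))\<^sup>2 \<partial>Rm m)" by (rule integral_complex_of_real)
  finally show ?thesis .
qed

lemma sum_single_compl:
  assumes "I \<subseteq> {1..n}"
  shows "(\<Sum>I'\<in>Pow {1..n}. if I \<union> I' = {1..n} then of_int (eps I I') * (a::complex) * b I' else 0)
       = of_int (eps I ({1..n} - I)) * a * b ({1..n} - I)"
proof -
  have "(\<Sum>I'\<in>Pow {1..n}. if I \<union> I' = {1..n} then of_int (eps I I') * a * b I' else 0)
      = (\<Sum>I'\<in>Pow {1..n}. if I' = {1..n} - I then of_int (eps I ({1..n} - I)) * a * b ({1..n} - I) else 0)"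
  proof (rule sum.cong[OF refl])
    fix I' assume I': "I' \<in> Pow {1..n}"
    show "(if I \<union> I' = {1..n} then of_int (eps I I') * a * b I' else 0) =
          (if I' = {1..n} - I then of_int (eps I ({1..n} - I)) * a * b ({1..n} - I) else 0)"
    proof (cases "I' = {1..n} - I")
      case True thus ?thesis using assms by auto
    next
      case False
      show ?thesis
      proof (cases "I \<union> I' = {1..n}")
        case True
        with False I' have "I \<inter> I' \<noteq> {}" by auto
        thus ?thesis using False by (simp add: eps_def)
      qed (use False in auto)
    qed
  qed
  also have "\<dots> = of_int (eps I ({1..n} - I)) * a * b ({1..n} - I)"
    by (simp add: sum.delta')
  finally show ?thesis .
qed

lemma IP:
  assumes F: "F \<in> L2s m n" and G: "G \<in> L2s m n"
  shows "L2ip m n F G = (\<Sum>I\<in>Pow {1..n}. of_int (eps I ({1..n} - I)) * ipc m (rep (F I)) (rep (G ({1..n} - I))))"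
proof -
  have "L2ip m n F G = (\<integral>x. (\<Sum>I\<in>Pow {1..n}. of_int (eps I ({1..n} - I)) *
          (cnj (rep (F I) x) * rep (G ({1..n} - I)) x)) \<partial>Rm m)"
    unfolding L2ip_def berezin_def gmult_def sconj_def
    by (rule Bochner_Integration.integral_cong[OF refl], rule sum.cong[OF refl], subst sum_single_compl)
       (auto simp: mult.assoc)
  also have "\<dots> = (\<Sum>I\<in>Pow {1..n}. (\<integral>x. of_int (eps I ({1..n} - I)) *
          (cnj (rep (F I) x) * rep (G ({1..n} - I)) x) \<partial>Rm m))"
    by (rule Bochner_Integration.integral_sum) (intro integrable_mult_right sqint_prod L2s_sq[OF F] L2s_sq[OF G])
  also have "\<dots> = (\<Sum>I\<in>Pow {1..n}. of_int (eps I ({1..n} - I)) * ipc m (rep (F I)) (rep (G ({1..n} - I))))"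
    by (simp add: ipc_def)
  finally show ?thesis .
qed


lemma ipc_addc_l: assumes x: "x \<in> L2s m n" and y: "y \<in> L2s m n" and w: "w \<in> L2s m n" shows
  "ipc m (rep (L2add m x y I)) (rep (w J)) = ipc m (rep (x I)) (rep (w J)) + ipc m (rep (y I)) (rep (w J))"
proof -
  have "ipc m (rep (L2add m x y I)) (rep (w J)) = ipc m (\<lambda>t. rep (x I) t + rep (y I) t) (rep (w J))"
    by (rule ipc_cong[OF L2s_sq[OF add_L2s[OF x y]] sqint_add[OF L2s_sq[OF x] L2s_sq[OF y]] L2s_sq[OF w] L2s_sq[OF w] addr[OF x y]]) simp
  also have "\<dots> = ipc m (rep (x I)) (rep (w J)) + ipc m (rep (y I)) (rep (w J))"
    by (rule ipc_add_l[OF L2s_sq[OF x] L2s_sq[OF y] L2s_sq[OF w]])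
  finally show ?thesis .
qed

lemma ipc_addc_r: assumes x: "x \<in> L2s m n" and y: "y \<in> L2s m n" and w: "w \<in> L2s m n" shows
  "ipc m (rep (w J)) (rep (L2add m x y I)) = ipc m (rep (w J)) (rep (x I)) + ipc m (rep (w J)) (rep (y I))"
proof -
  have "ipc m (rep (w J)) (rep (L2add m x y I)) = ipc m (rep (w J)) (\<lambda>t. rep (x I) t + rep (y I) t)"
    by (rule ipc_cong[OF L2s_sq[OF w] L2s_sq[OF w] L2s_sq[OF add_L2s[OF x y]] sqint_add[OF L2s_sq[OF x] L2s_sq[OF y]] _ addr[OF x y]]) simp
  also have "\<dots> = ipc m (rep (w J)) (rep (x I)) + ipc m (rep (w J)) (rep (y I))"
    by (rule ipc_add_r[OF L2s_sq[OF x] L2s_sq[OF y] L2s_sq[OF w]])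
  finally show ?thesis .
qed

lemma ipc_smulc_l: assumes x: "x \<in> L2s m n" and w: "w \<in> L2s m n" shows
  "ipc m (rep (L2smul m c x I)) (rep (w J)) = cnj c * ipc m (rep (x I)) (rep (w J))"
proof -
  have "ipc m (rep (L2smul m c x I)) (rep (w J)) = ipc m (\<lambda>t. c * rep (x I) t) (rep (w J))"
    by (rule ipc_cong[OF L2s_sq[OF smul_L2s[OF x]] sqint_smul[OF L2s_sq[OF x]] L2s_sq[OF w] L2s_sq[OF w] smulr[OF x]]) simp
  thus ?thesis by (simp add: ipc_smul_l)
qed

lemma ipc_smulc_r: assumes x: "x \<in> L2s m n" and w: "w \<in> L2s m n" shows
  "ipc m (rep (w J)) (rep (L2smul m c x I)) = c * ipc m (rep (w J)) (rep (x I))"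
proof -
  have "ipc m (rep (w J)) (rep (L2smul m c x I)) = ipc m (rep (w J)) (\<lambda>t. c * rep (x I) t)"
    by (rule ipc_cong[OF L2s_sq[OF w] L2s_sq[OF w] L2s_sq[OF smul_L2s[OF x]] sqint_smul[OF L2s_sq[OF x]] _ smulr[OF x]]) simp
  thus ?thesis by (simp add: ipc_smul_r)
qed

lemma sesq: "sesquilinear (L2s m n) (L2add m) (L2smul m) (L2ip m n)"
  unfolding sesquilinear_def
  by (auto simp: IP add_L2s smul_L2s ipc_addc_l ipc_addc_r ipc_smulc_l ipc_smulc_r
      sum.distrib sum_distrib_left algebra_simps)


lemma eps_swap:
  assumes "finite I" "finite K" "I \<inter> K = {}"
  shows "eps I K = (-1) ^ (card I * card K) * eps K I"
proof -
  define A where "A = {(i, j). i \<in> I \<and> j \<in> K \<and> j < i}"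
  define B where "B = {(i, j). i \<in> K \<and> j \<in> I \<and> j < i}"
  define B' where "B' = {(i, j). i \<in> I \<and> j \<in> K \<and> i < j}"
  have fA: "finite A" by (rule finite_subset[of _ "I \<times> K"]) (use assms in \<open>auto simp: A_def\<close>)
  have fB': "finite B'" by (rule finite_subset[of _ "I \<times> K"]) (use assms in \<open>auto simp: B'_def\<close>)
  have "B = prod.swap ` B'" unfolding B_def B'_def by auto
  hence cB: "card B = card B'" by (simp add: card_image)
  have "A \<union> B' = I \<times> K" using assms(3) unfolding A_def B'_def by (auto simp: linorder_neq_iff)
  moreover have "A \<inter> B' = {}" unfolding A_def B'_def by auto
  ultimately have "card A + card B' = card I * card K"
    using card_Un_disjoint[OF fA fB'] by (simp add: card_cartesian_product)
  hence "(-1::int) ^ (card I * card K) * (-1) ^ card B = (-1) ^ (card A + card B' + card B')"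
    by (simp add: cB power_add[symmetric])
  also have "\<dots> = (-1) ^ card A * ((-1) ^ card B' * (-1) ^ card B')" by (simp add: power_add)
  also have "\<dots> = (-1) ^ card A" by (simp add: power_mult_distrib[symmetric])
  finally show ?thesis using assms(3) unfolding eps_def A_def B_def by (auto simp: Int_commute)
qed

lemma eps_sq: "I \<inter> K = {} \<Longrightarrow> eps I K * eps I K = 1"
  unfolding eps_def by (simp add: power_add[symmetric] flip: mult_2)

lemma minus_one_pow_par: "even (a + c) \<Longrightarrow> even (b + d) \<Longrightarrow> ((-1)::'a::ring_1) ^ (a * b) = (-1) ^ (c * d)"
  by (simp add: minus_one_power_iff even_mult_iff)

lemma card_compl: "I \<subseteq> {1..n} \<Longrightarrow> card ({1..n} - I) = n - card I"
  by (simp add: card_Diff_subset finite_subset)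

lemma hz: "x \<in> L2even m n \<union> L2odd m n \<Longrightarrow> odd (card I + deg (L2even m n) x) \<Longrightarrow> x I = L2zero m I"
proof (cases "x \<in> L2even m n")
  case True
  assume "odd (card I + deg (L2even m n) x)"
  with True have "odd (card I)" by (simp add: deg_def)
  with True show ?thesis by (simp add: L2even_def)
next
  case False
  assume "x \<in> L2even m n \<union> L2odd m n" "odd (card I + deg (L2even m n) x)"
  with False have "x \<in> L2odd m n" "even (card I)" by (auto simp: deg_def)
  thus ?thesis by (simp add: L2odd_def)
qed

lemma hz_rep: "x \<in> L2even m n \<union> L2odd m n \<Longrightarrow> odd (card I + deg (L2even m n) x) \<Longrightarrow>
   AE t in Rm m. rep (x I) t = 0"
  using hz rep_zero by metis

lemma hom_L2s: "x \<in> L2even m n \<union> L2odd m n \<Longrightarrow> x \<in> L2s m n"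
  by (auto simp: L2even_def L2odd_def)

lemma compl_reindex: "(\<Sum>I\<in>Pow {1..n}. f I) = (\<Sum>I\<in>Pow {1..n}. f ({1..n} - I))"
  by (rule sum.reindex_bij_witness[where i="\<lambda>I. {1..n} - I" and j="\<lambda>I. {1..n} - I"])
     (auto simp: Diff_Diff_Int Int_absorb1)

lemma par1: "\<not> odd (c + a) \<Longrightarrow> (a + b) mod 2 \<noteq> n mod 2 \<Longrightarrow> c \<le> n \<Longrightarrow> odd (n - c + (b::nat))"
  by presburger

lemma ip_hom:
  assumes x: "x \<in> L2even m n \<union> L2odd m n" and y: "y \<in> L2even m n \<union> L2odd m n"
    and ne: "L2ip m n x y \<noteq> 0"
  shows "(deg (L2even m n) x + deg (L2even m n) y) mod 2 = n mod 2"
proof (rule ccontr)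
  assume bad: "\<not> ?thesis"
  have "L2ip m n x y = 0"
    unfolding IP[OF hom_L2s[OF x] hom_L2s[OF y]]
  proof (rule sum.neutral, rule ballI)
    fix I assume "I \<in> Pow {1..n}"
    hence I: "I \<subseteq> {1..n}" by auto
    have cI: "card I \<le> n" using card_mono[OF _ I] by simp
    show "of_int (eps I ({1..n} - I)) * ipc m (rep (x I)) (rep (y ({1..n} - I))) = 0"
    proof (cases "odd (card I + deg (L2even m n) x)")
      case True thus ?thesis using hz_rep[OF x True] ipc_zero_l by simp
    next
      case False
      have "odd (card ({1..n} - I) + deg (L2even m n) y)"
        using par1[OF False bad cI] unfolding card_compl[OF I] .
      thus ?thesis using hz_rep[OF y] ipc_zero_r by simp
    qed
  qed
  with ne show False by simp
qed

lemma ip_superherm: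
  assumes x: "x \<in> L2even m n \<union> L2odd m n" and y: "y \<in> L2even m n \<union> L2odd m n"
  shows "cnj (L2ip m n x y) = (-1) ^ (deg (L2even m n) x * deg (L2even m n) y) * L2ip m n y x"
proof -
  let ?U = "{1..n}" and ?dx = "deg (L2even m n) x" and ?dy = "deg (L2even m n) y"
  have "cnj (L2ip m n x y) = (\<Sum>I\<in>Pow ?U. of_int (eps I (?U - I)) * ipc m (rep (y (?U - I))) (rep (x I)))"
    unfolding IP[OF hom_L2s[OF x] hom_L2s[OF y]] by (simp add: ipc_cnj)
  also have "\<dots> = (\<Sum>I\<in>Pow ?U. (-1) ^ (?dx * ?dy) * (of_int (eps (?U - I) I) * ipc m (rep (y (?U - I))) (rep (x I))))"
  proof (rule sum.cong[OF refl])
    fix I assume "I \<in> Pow ?U"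
    hence I: "I \<subseteq> ?U" by auto
    show "of_int (eps I (?U - I)) * ipc m (rep (y (?U - I))) (rep (x I)) =
      (-1) ^ (?dx * ?dy) * (of_int (eps (?U - I) I) * ipc m (rep (y (?U - I))) (rep (x I)))"
    proof (cases "odd (card I + ?dx) \<or> odd (card (?U - I) + ?dy)")
      case True
      hence "ipc m (rep (y (?U - I))) (rep (x I)) = 0"
        using hz_rep[OF x, of I] hz_rep[OF y, of "?U - I"] ipc_zero_l ipc_zero_r by blast
      thus ?thesis by simp
    next
      case False
      have fin: "finite I" using I finite_subset by blast
      have "eps I (?U - I) = (-1) ^ (card I * card (?U - I)) * eps (?U - I) I"
        by (rule eps_swap) (use fin in auto)
      moreover have "((-1)::int) ^ (card I * card (?U - I)) = (-1) ^ (?dx * ?dy)"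
        using False by (intro minus_one_pow_par) auto
      ultimately show ?thesis by simp
    qed
  qed
  also have "\<dots> = (-1) ^ (?dx * ?dy) * (\<Sum>I\<in>Pow ?U. of_int (eps (?U - I) I) * ipc m (rep (y (?U - I))) (rep (x I)))"
    by (simp add: sum_distrib_left)
  also have "(\<Sum>I\<in>Pow ?U. of_int (eps (?U - I) I) * ipc m (rep (y (?U - I))) (rep (x I))) = L2ip m n y x"
    unfolding IP[OF hom_L2s[OF y] hom_L2s[OF x]]
    by (subst compl_reindex) (rule sum.cong[OF refl], auto simp: double_diff)
  finally show ?thesis .
qed


lemma J_L2s: "F \<in> L2s m n \<Longrightarrow> L2J m n F \<in> L2s m n"
  unfolding L2J_def L2s_def
  by (auto intro!: L2cls_in sqint_smul rep_sqint simp: L2s_L2[of F m n, unfolded L2s_def])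

lemma Jr: "F \<in> L2s m n \<Longrightarrow> K \<subseteq> {1..n} \<Longrightarrow>
   AE t in Rm m. rep (L2J m n F K) t = of_int (eps ({1..n} - K) K) * rep (F ({1..n} - K)) t"
  unfolding L2J_def by (simp add: rep_cls[OF sqint_smul[OF L2s_sq]])

lemma J_add: "x \<in> L2s m n \<Longrightarrow> y \<in> L2s m n \<Longrightarrow> L2J m n (L2add m x y) = L2add m (L2J m n x) (L2J m n y)"
proof (rule L2s_eqI[of _ m n])
  fix K assume h: "x \<in> L2s m n" "y \<in> L2s m n" and K: "K \<subseteq> {1..n}"
  from Jr[OF add_L2s[OF h] K] addr[OF h, of "{1..n} - K"] addr[OF J_L2s[OF h(1)] J_L2s[OF h(2)], of K]
    Jr[OF h(1) K] Jr[OF h(2) K]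
  show "AE t in Rm m. rep (L2J m n (L2add m x y) K) t = rep (L2add m (L2J m n x) (L2J m n y) K) t"
    by eventually_elim (simp add: algebra_simps)
qed (auto simp: J_L2s add_L2s)

lemma J_smul: "x \<in> L2s m n \<Longrightarrow> L2J m n (L2smul m c x) = L2smul m c (L2J m n x)"
proof (rule L2s_eqI[of _ m n])
  fix K assume h: "x \<in> L2s m n" and K: "K \<subseteq> {1..n}"
  from Jr[OF smul_L2s[OF h, of c] K] smulr[OF h, of c "{1..n} - K"] smulr[OF J_L2s[OF h], of c K]
    Jr[OF h K]
  show "AE t in Rm m. rep (L2J m n (L2smul m c x) K) t = rep (L2smul m c (L2J m n x) K) t"
    by eventually_elim (simp add: algebra_simps)
qed (auto simp: J_L2s smul_L2s)

lemma hpart_eq: "hpart (L2even m n) (L2odd m n) d = {x \<in> L2s m n. \<forall>I. odd (card I + d) \<longrightarrow> x I = L2zero m I}"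
  unfolding hpart_def L2even_def L2odd_def by auto

lemma J_hpart:
  assumes "x \<in> hpart (L2even m n) (L2odd m n) d"
  shows "L2J m n x \<in> hpart (L2even m n) (L2odd m n) (d + n)"
proof -
  have x: "x \<in> L2s m n" and z: "\<And>I. odd (card I + d) \<Longrightarrow> x I = L2zero m I"
    using assms by (auto simp: hpart_eq)
  have "L2J m n x K = L2zero m K" if K: "odd (card K + (d + n))" for K
  proof (cases "K \<subseteq> {1..n}")
    case True
    have cK: "card K \<le> n" using card_mono[OF _ True] by simp
    have "odd (card ({1..n} - K) + d)" using K cK unfolding card_compl[OF True] by presburger
    hence "x ({1..n} - K) = L2zero m ({1..n} - K)" by (rule z)
    hence "AE t in Rm m. of_int (eps ({1..n} - K) K) * rep (x ({1..n} - K)) t = 0"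
      using rep_zero[of m "{1..n} - K"] by (auto elim: AE_mp)
    thus ?thesis using True unfolding L2J_def by (simp add: L2cls_zeroI)
  next
    case False thus ?thesis by (simp add: L2J_def)
  qed
  thus ?thesis using J_L2s[OF x] by (simp add: hpart_eq)
qed

lemma JJ:
  assumes xh: "x \<in> L2even m n \<union> L2odd m n"
  shows "L2J m n (L2J m n x) = L2smul m ((-1) ^ ((n + 1) * deg (L2even m n) x)) x"
proof (rule L2s_eqI[of _ m n])
  have x: "x \<in> L2s m n" by (rule hom_L2s[OF xh])
  show "L2J m n (L2J m n x) \<in> L2s m n" by (intro J_L2s x)
  show "L2smul m ((-1) ^ ((n + 1) * deg (L2even m n) x)) x \<in> L2s m n" by (intro smul_L2s x)
  fix K assume K: "K \<subseteq> {1..n}"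
  let ?U = "{1..n}" and ?d = "deg (L2even m n) x"
  have CK: "?U - K \<subseteq> ?U" by auto
  have CCK: "?U - (?U - K) = K" using K by auto
  show "AE t in Rm m. rep (L2J m n (L2J m n x) K) t = rep (L2smul m ((-1) ^ ((n + 1) * ?d)) x K) t"
  proof (cases "odd (card K + ?d)")
    case True
    from Jr[OF J_L2s[OF x] K] Jr[OF x CK] hz_rep[OF xh True] smulr[OF x, of "(-1) ^ ((n + 1) * ?d)" K]
    show ?thesis unfolding CCK by eventually_elim simp
  next
    case False
    have fin: "finite K" using K finite_subset by blast
    have cK: "card K \<le> n" using card_mono[OF _ K] by simp
    have "eps (?U - K) K * eps K (?U - K) = (-1) ^ (card (?U - K) * card K) * (eps K (?U - K) * eps K (?U - K))"
      by (subst eps_swap) (use fin in auto)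
    also have "\<dots> = (-1) ^ (card (?U - K) * card K)" by (subst eps_sq) auto
    also have "\<dots> = (-1) ^ ((n + 1) * ?d)"
      unfolding card_compl[OF K] using False cK
      by (simp add: minus_one_power_iff even_mult_iff)
    finally have "complex_of_int (eps (?U - K) K * eps K (?U - K)) = complex_of_int ((-1) ^ ((n + 1) * ?d))"
      by simp
    hence e: "complex_of_int (eps (?U - K) K) * complex_of_int (eps K (?U - K)) = (-1) ^ ((n + 1) * ?d)"
      by simp
    from Jr[OF J_L2s[OF x] K] Jr[OF x CK] smulr[OF x, of "(-1) ^ ((n + 1) * ?d)" K]
    show ?thesis unfolding CCK by eventually_elim (simp only: e mult.assoc[symmetric])
  qed
qed


definition nr :: "nat \<Rightarrow> ((nat \<Rightarrow> real) \<Rightarrow> complex) \<Rightarrow> real" where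
  "nr m f = (\<integral>x. (cmod (f x))\<^sup>2 \<partial>Rm m)"

lemma nr_nonneg: "0 \<le> nr m f"
  unfolding nr_def by (rule integral_nonneg_AE) auto

lemma nr_cong: "sqint m f \<Longrightarrow> sqint m g \<Longrightarrow> AE x in Rm m. f x = g x \<Longrightarrow> nr m f = nr m g"
  unfolding nr_def
  by (rule integral_cong_AE) (auto simp: sqint_def elim: AE_mp)

lemma ipc_self': "ipc m f f = of_real (nr m f)"
  by (simp add: ipc_self nr_def)

lemma ipcJr:
  assumes x: "x \<in> L2s m n" and y: "y \<in> L2s m n" and K: "K \<subseteq> {1..n}"
  shows "ipc m (rep (x I)) (rep (L2J m n y K)) = of_int (eps ({1..n} - K) K) * ipc m (rep (x I)) (rep (y ({1..n} - K)))"
proof -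
  have "ipc m (rep (x I)) (rep (L2J m n y K)) = ipc m (rep (x I)) (\<lambda>t. of_int (eps ({1..n} - K) K) * rep (y ({1..n} - K)) t)"
    by (rule ipc_cong[OF L2s_sq[OF x] L2s_sq[OF x] L2s_sq[OF J_L2s[OF y]] sqint_smul[OF L2s_sq[OF y]] _ Jr[OF y K]]) simp
  thus ?thesis by (simp add: ipc_smul_r)
qed

lemma ipcJl:
  assumes x: "x \<in> L2s m n" and y: "y \<in> L2s m n" and K: "K \<subseteq> {1..n}"
  shows "ipc m (rep (L2J m n x K)) (rep (y I)) = of_int (eps ({1..n} - K) K) * ipc m (rep (x ({1..n} - K))) (rep (y I))"
proof -
  have "ipc m (rep (L2J m n x K)) (rep (y I)) = ipc m (\<lambda>t. of_int (eps ({1..n} - K) K) * rep (x ({1..n} - K)) t) (rep (y I))"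
    by (rule ipc_cong[OF L2s_sq[OF J_L2s[OF x]] sqint_smul[OF L2s_sq[OF x]] L2s_sq[OF y] L2s_sq[OF y] Jr[OF x K]]) simp
  thus ?thesis by (simp add: ipc_smul_l)
qed

lemma eps_sq_c: "I \<subseteq> {1..n} \<Longrightarrow>
  complex_of_int (eps I ({1..n} - I)) * complex_of_int (eps I ({1..n} - I)) = 1"
proof -
  have "eps I ({1..n} - I) * eps I ({1..n} - I) = 1" by (rule eps_sq) auto
  hence "complex_of_int (eps I ({1..n} - I) * eps I ({1..n} - I)) = 1" by simp
  thus ?thesis by simp
qed

lemma IPJ:
  assumes x: "x \<in> L2s m n" and y: "y \<in> L2s m n"
  shows "L2ip m n x (L2J m n y) = (\<Sum>I\<in>Pow {1..n}. ipc m (rep (x I)) (rep (y I)))"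
  unfolding IP[OF x J_L2s[OF y]]
proof (rule sum.cong[OF refl])
  fix I assume "I \<in> Pow {1..n}"
  hence I: "I \<subseteq> {1..n}" by auto
  have CC: "{1..n} - ({1..n} - I) = I" using I by auto
  have "complex_of_int (eps I ({1..n} - I)) * ipc m (rep (x I)) (rep (L2J m n y ({1..n} - I)))
     = (complex_of_int (eps I ({1..n} - I)) * complex_of_int (eps I ({1..n} - I))) * ipc m (rep (x I)) (rep (y I))"
    by (simp only: ipcJr[OF x y Diff_subset] CC mult.assoc)
  thus "complex_of_int (eps I ({1..n} - I)) * ipc m (rep (x I)) (rep (L2J m n y ({1..n} - I))) = ipc m (rep (x I)) (rep (y I))"
    by (simp only: eps_sq_c[OF I] mult_1)
qed

lemma J_iso:
  assumes x: "x \<in> L2s m n" and y: "y \<in> L2s m n"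
  shows "L2ip m n (L2J m n x) (L2J m n y) = L2ip m n x y"
proof -
  let ?U = "{1..n}"
  have "L2ip m n (L2J m n x) (L2J m n y) = (\<Sum>I\<in>Pow ?U. of_int (eps (?U - I) I) * ipc m (rep (x (?U - I))) (rep (y I)))"
    unfolding IP[OF J_L2s[OF x] J_L2s[OF y]]
  proof (rule sum.cong[OF refl])
    fix I assume "I \<in> Pow ?U"
    hence I: "I \<subseteq> ?U" by auto
    have CC: "?U - (?U - I) = I" using I by auto
    have "complex_of_int (eps I (?U - I)) * ipc m (rep (L2J m n x I)) (rep (L2J m n y (?U - I)))
      = (complex_of_int (eps I (?U - I)) * complex_of_int (eps I (?U - I))) * (complex_of_int (eps (?U - I) I) * ipc m (rep (x (?U - I))) (rep (y I)))"
      by (simp only: ipcJl[OF x J_L2s[OF y] I] ipcJr[OF x y Diff_subset] CC mult.assoc mult.left_commute)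
    thus "complex_of_int (eps I (?U - I)) * ipc m (rep (L2J m n x I)) (rep (L2J m n y (?U - I)))
      = complex_of_int (eps (?U - I) I) * ipc m (rep (x (?U - I))) (rep (y I))"
      by (simp only: eps_sq_c[OF I] mult_1)
  qed
  also have "\<dots> = L2ip m n x y"
    unfolding IP[OF x y]
    by (subst compl_reindex) (rule sum.cong[OF refl], auto simp: Diff_Diff_Int Int_absorb1)
  finally show ?thesis .
qed

lemma herm:
  assumes x: "x \<in> L2s m n" and y: "y \<in> L2s m n"
  shows "cnj (L2ip m n x (L2J m n y)) = L2ip m n y (L2J m n x)"
  by (simp add: IPJ[OF x y] IPJ[OF y x] ipc_cnj)

lemma posJ:
  assumes x: "x \<in> L2s m n"
  shows "L2ip m n x (L2J m n x) = of_real (\<Sum>I\<in>Pow {1..n}. nr m (rep (x I)))"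
  by (simp add: IPJ[OF x x] ipc_self')

lemma pos_def:
  assumes x: "x \<in> L2s m n"
  shows "Im (L2ip m n x (L2J m n x)) = 0 \<and> Re (L2ip m n x (L2J m n x)) \<ge> 0 \<and>
    (L2ip m n x (L2J m n x) = 0 \<longrightarrow> x = L2zero m)"
proof (intro conjI impI)
  show "Im (L2ip m n x (L2J m n x)) = 0" by (simp add: posJ[OF x])
  show "Re (L2ip m n x (L2J m n x)) \<ge> 0" by (simp add: posJ[OF x] sum_nonneg nr_nonneg)
  assume "L2ip m n x (L2J m n x) = 0"
  hence "complex_of_real (\<Sum>I\<in>Pow {1..n}. nr m (rep (x I))) = 0" by (simp only: posJ[OF x])
  hence "(\<Sum>I\<in>Pow {1..n}. nr m (rep (x I))) = 0" by (simp only: of_real_eq_0_iff)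
  hence z: "\<forall>I\<in>Pow {1..n}. nr m (rep (x I)) = 0" by (simp add: sum_nonneg_eq_0_iff nr_nonneg)
  show "x = L2zero m"
  proof
    fix I show "x I = L2zero m I"
    proof (cases "I \<subseteq> {1..n}")
      case True
      hence "nr m (rep (x I)) = 0" using z by auto
      hence "AE t in Rm m. (cmod (rep (x I) t))\<^sup>2 = 0"
        unfolding nr_def using integral_nonneg_eq_0_iff_AE[OF sqint_int[OF L2s_sq[OF x]]] by simp
      hence "AE t in Rm m. rep (x I) t = 0" by simp
      thus ?thesis by (rule L2s_zeroI[OF x])
    next
      case False thus ?thesis using x by (simp add: L2s_def)
    qed
  qed
qed

lemma dist_formula:
  assumes x: "x \<in> L2s m n" and y: "y \<in> L2s m n"
  shows "Re (L2ip m n (L2add m x (L2smul m (-1) y)) (L2J m n (L2add m x (L2smul m (-1) y))))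
       = (\<Sum>I\<in>Pow {1..n}. nr m (\<lambda>t. rep (x I) t - rep (y I) t))"
proof -
  have d: "L2add m x (L2smul m (-1) y) \<in> L2s m n" by (intro add_L2s smul_L2s x y)
  have "nr m (rep (L2add m x (L2smul m (-1) y) I)) = nr m (\<lambda>t. rep (x I) t - rep (y I) t)" for I
  proof (rule nr_cong[OF L2s_sq[OF d]])
    show "sqint m (\<lambda>t. rep (x I) t - rep (y I) t)"
      using sqint_add[OF L2s_sq[OF x] sqint_smul[OF L2s_sq[OF y], of "-1"]] by simp
    from addr[OF x smul_L2s[OF y, of "-1"], of I] smulr[OF y, of "-1" I]
    show "AE t in Rm m. rep (L2add m x (L2smul m (-1) y) I) t = rep (x I) t - rep (y I) t"
      by eventually_elim simp
  qed
  thus ?thesis by (simp add: posJ[OF d])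
qed

lemma nn_nr: "sqint m f \<Longrightarrow> (\<integral>\<^sup>+x. ennreal ((cmod (f x))\<^sup>2) \<partial>Rm m) = ennreal (nr m f)"
  unfolding nr_def by (rule nn_integral_eq_integral[OF sqint_int]) auto

lemma bound_aux:
  fixes a c :: real assumes "0 \<le> a" "0 < c"
  shows "a \<le> 1 / c + c * a\<^sup>2"
proof (cases "a \<le> 1 / c")
  case True
  have "0 \<le> c * a\<^sup>2" using assms by simp
  with True show ?thesis by linarith
next
  case False
  hence "1 < c * a" using assms by (simp add: field_simps)
  hence "a \<le> (c * a) * a" using assms by (simp add: mult_le_cancel_right1)
  hence "a \<le> c * a\<^sup>2" by (simp add: power2_eq_square mult.assoc)
  moreover have "0 \<le> 1/c" using assms by simp
  ultimately show ?thesis by linarith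
qed

lemma RF:
  fixes g :: "nat \<Rightarrow> (nat \<Rightarrow> real) \<Rightarrow> complex"
  assumes sq: "\<And>k. sqint m (g k)"
    and C: "\<And>e. e > 0 \<Longrightarrow> \<exists>N. \<forall>i j. i \<ge> N \<longrightarrow> j \<ge> N \<longrightarrow> nr m (\<lambda>x. g i x - g j x) < e"
  shows "\<exists>f. sqint m f \<and> (\<lambda>k. nr m (\<lambda>x. g k x - f x)) \<longlonglongrightarrow> 0"
proof -
  have meas[measurable]: "\<And>k. g k \<in> borel_measurable (Rm m)" using sq by (simp add: sqint_def)
  have sqd: "sqint m (\<lambda>x. g i x - g j x)" for i j
    using sqint_add[OF sq sqint_smul[OF sq, of "-1"]] by simp
  have "\<forall>k. \<exists>N. \<forall>i j. i \<ge> N \<longrightarrow> j \<ge> N \<longrightarrow> nr m (\<lambda>x. g i x - g j x) < (1/4)^k"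
    using C by simp
  then obtain N where N: "\<And>k i j. i \<ge> N k \<Longrightarrow> j \<ge> N k \<Longrightarrow> nr m (\<lambda>x. g i x - g j x) < (1/4)^k"
    by metis
  define \<phi> where "\<phi> k = k + (\<Sum>l\<le>k. N l)" for k
  have \<phi>1: "N k \<le> \<phi> k" for k
  proof -
    have "N k \<le> (\<Sum>l\<le>k. N l)" by (rule member_le_sum) auto
    thus ?thesis unfolding \<phi>_def by simp
  qed
  have \<phi>2: "N k \<le> \<phi> (Suc k)" for k
  proof -
    have "N k \<le> (\<Sum>l\<le>Suc k. N l)" by (rule member_le_sum) auto
    thus ?thesis unfolding \<phi>_def by simp
  qed
  have \<phi>3: "k \<le> \<phi> k" for k unfolding \<phi>_def by simp
  define h where "h k = g (\<phi> k)" for k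
  define d where "d k x = h (Suc k) x - h k x" for k x
  have [measurable]: "h k \<in> borel_measurable (Rm m)" for k unfolding h_def by simp
  have [measurable]: "d k \<in> borel_measurable (Rm m)" for k unfolding d_def by simp
  have sqdk: "sqint m (d k)" for k unfolding d_def h_def by (rule sqd)
  have nd: "nr m (d k) < (1/4)^k" for k unfolding d_def h_def using N[OF \<phi>2 \<phi>1] .
  have ik: "(\<integral>\<^sup>+x. ennreal (2^k * (cmod (d k x))\<^sup>2) \<partial>Rm m) \<le> ennreal ((1/2)^k)" for k
  proof -
    have "(\<integral>\<^sup>+x. ennreal (2^k * (cmod (d k x))\<^sup>2) \<partial>Rm m) = ennreal (2^k) * (\<integral>\<^sup>+x. ennreal ((cmod (d k x))\<^sup>2) \<partial>Rm m)"
      by (simp add: ennreal_mult nn_integral_cmult)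
    also have "\<dots> = ennreal (2^k * nr m (d k))" unfolding nn_nr[OF sqdk] by (rule ennreal_mult[symmetric]) (auto simp: nr_nonneg)
    also have "\<dots> \<le> ennreal ((1/2)^k)"
    proof -
      have "2^k * nr m (d k) \<le> 2^k * (1/4)^k" using nd[of k] by (intro mult_left_mono) auto
      also have "\<dots> = (1/2)^k" by (simp add: power_mult_distrib[symmetric])
      finally show ?thesis by simp
    qed
    finally show ?thesis .
  qed
  have "(\<integral>\<^sup>+x. (\<Sum>k. ennreal (2^k * (cmod (d k x))\<^sup>2)) \<partial>Rm m) = (\<Sum>k. \<integral>\<^sup>+x. ennreal (2^k * (cmod (d k x))\<^sup>2) \<partial>Rm m)"
    by (rule nn_integral_suminf) measurable
  also have "\<dots> \<le> (\<Sum>k. ennreal ((1/2)^k))"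
    by (rule suminf_le[OF ik summableI summableI])
  also have "\<dots> = ennreal 2"
    by (subst suminf_ennreal2) (auto simp: suminf_geometric summable_geometric)
  finally have "(\<integral>\<^sup>+x. (\<Sum>k. ennreal (2^k * (cmod (d k x))\<^sup>2)) \<partial>Rm m) \<le> ennreal 2" .
  hence fin: "(\<integral>\<^sup>+x. (\<Sum>k. ennreal (2^k * (cmod (d k x))\<^sup>2)) \<partial>Rm m) \<noteq> \<infinity>"
    by (auto simp: top_unique)
  have "AE x in Rm m. (\<Sum>k. ennreal (2^k * (cmod (d k x))\<^sup>2)) \<noteq> \<infinity>"
    by (rule nn_integral_PInf_AE[OF _ fin]) measurable
  hence AEc: "AE x in Rm m. convergent (\<lambda>k. h k x)"
  proof (rule AE_mp, intro AE_I2 impI)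
    fix x assume "(\<Sum>k. ennreal (2^k * (cmod (d k x))\<^sup>2)) \<noteq> \<infinity>"
    hence s1: "summable (\<lambda>k. 2^k * (cmod (d k x))\<^sup>2)"
      by (intro summable_suminf_not_top) auto
    have "summable (\<lambda>k. (1/2)^k + 2^k * (cmod (d k x))\<^sup>2)"
      by (intro summable_add s1 summable_geometric) simp
    hence "summable (\<lambda>k. norm (d k x))"
    proof (rule summable_comparison_test')
      fix k :: nat
      have "cmod (d k x) \<le> 1 / 2^k + 2^k * (cmod (d k x))\<^sup>2"
        by (rule bound_aux) auto
      thus "norm (norm (d k x)) \<le> (1/2)^k + 2^k * (cmod (d k x))\<^sup>2"
        by (simp add: power_one_over)
    qed
    hence "summable (\<lambda>k. d k x)" by (rule summable_norm_cancel)
    hence "(\<lambda>k. \<Sum>l<k. d l x) \<longlonglongrightarrow> (\<Sum>l. d l x)" by (rule summable_LIMSEQ)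
    hence "(\<lambda>k. h 0 x + (\<Sum>l<k. d l x)) \<longlonglongrightarrow> h 0 x + (\<Sum>l. d l x)" by (intro tendsto_add tendsto_const)
    moreover have "h 0 x + (\<Sum>l<k. d l x) = h k x" for k
      unfolding d_def using sum_lessThan_telescope[of "\<lambda>l. h l x" k] by simp
    ultimately show "convergent (\<lambda>k. h k x)" unfolding convergent_def by auto
  qed
  define f where "f x = lim (\<lambda>k. h k x)" for x
  have fm[measurable]: "f \<in> borel_measurable (Rm m)" unfolding f_def by measurable
  have AEl: "AE x in Rm m. (\<lambda>k. h k x) \<longlonglongrightarrow> f x"
    using AEc by (rule AE_mp) (auto simp: f_def convergent_LIMSEQ_iff)
  have key: "(\<integral>\<^sup>+x. ennreal ((cmod (g i x - f x))\<^sup>2) \<partial>Rm m) \<le>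
     liminf (\<lambda>k. \<integral>\<^sup>+x. ennreal ((cmod (g i x - h k x))\<^sup>2) \<partial>Rm m)" for i
  proof -
    have "AE x in Rm m. liminf (\<lambda>k. ennreal ((cmod (g i x - h k x))\<^sup>2)) = ennreal ((cmod (g i x - f x))\<^sup>2)"
      using AEl
    proof (rule AE_mp, intro AE_I2 impI)
      fix x assume "(\<lambda>k. h k x) \<longlonglongrightarrow> f x"
      hence "(\<lambda>k. ennreal ((cmod (g i x - h k x))\<^sup>2)) \<longlonglongrightarrow> ennreal ((cmod (g i x - f x))\<^sup>2)"
        by (intro tendsto_ennrealI tendsto_power tendsto_norm tendsto_diff tendsto_const)
      thus "liminf (\<lambda>k. ennreal ((cmod (g i x - h k x))\<^sup>2)) = ennreal ((cmod (g i x - f x))\<^sup>2)"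
        by (intro lim_imp_Liminf) auto
    qed
    hence "(\<integral>\<^sup>+x. ennreal ((cmod (g i x - f x))\<^sup>2) \<partial>Rm m) =
       (\<integral>\<^sup>+x. liminf (\<lambda>k. ennreal ((cmod (g i x - h k x))\<^sup>2)) \<partial>Rm m)"
      by (intro nn_integral_cong_AE) (auto elim: AE_mp)
    also have "\<dots> \<le> liminf (\<lambda>k. \<integral>\<^sup>+x. ennreal ((cmod (g i x - h k x))\<^sup>2) \<partial>Rm m)"
      by (rule nn_integral_liminf) measurable
    finally show ?thesis .
  qed
  have P: "\<exists>Ne. \<forall>i\<ge>Ne. sqint m (\<lambda>x. g i x - f x) \<and> nr m (\<lambda>x. g i x - f x) \<le> e" if e: "e > 0" for e
  proof -
    obtain Ne where Ne: "\<And>i j. i \<ge> Ne \<Longrightarrow> j \<ge> Ne \<Longrightarrow> nr m (\<lambda>x. g i x - g j x) < e"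
      using C[OF e] by blast
    have "sqint m (\<lambda>x. g i x - f x) \<and> nr m (\<lambda>x. g i x - f x) \<le> e" if i: "i \<ge> Ne" for i
    proof -
      have "liminf (\<lambda>k. \<integral>\<^sup>+x. ennreal ((cmod (g i x - h k x))\<^sup>2) \<partial>Rm m) \<le>
            limsup (\<lambda>k. \<integral>\<^sup>+x. ennreal ((cmod (g i x - h k x))\<^sup>2) \<partial>Rm m)"
        by (rule Liminf_le_Limsup) simp
      also have "\<dots> \<le> ennreal e"
      proof (rule Limsup_bounded, rule eventually_sequentiallyI)
        fix k assume "Ne \<le> k"
        hence "Ne \<le> \<phi> k" using \<phi>3[of k] by linarith
        hence "nr m (\<lambda>x. g i x - h k x) < e" unfolding h_def using Ne[OF i] by blast
        thus "(\<integral>\<^sup>+x. ennreal ((cmod (g i x - h k x))\<^sup>2) \<partial>Rm m) \<le> ennreal e"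
          unfolding h_def using nn_nr[OF sqd[of i "\<phi> k"]] by (auto intro!: ennreal_leI)
      qed
      finally have le: "(\<integral>\<^sup>+x. ennreal ((cmod (g i x - f x))\<^sup>2) \<partial>Rm m) \<le> ennreal e"
        using key[of i] by simp
      have intq: "integrable (Rm m) (\<lambda>x. (cmod (g i x - f x))\<^sup>2)"
      proof (rule integrableI_bounded)
        show "(\<lambda>x. (cmod (g i x - f x))\<^sup>2) \<in> borel_measurable (Rm m)" by measurable
        show "(\<integral>\<^sup>+x. ennreal (norm ((cmod (g i x - f x))\<^sup>2)) \<partial>Rm m) < \<infinity>"
          using le by (simp add: le_less_trans)
      qed
      hence sqf: "sqint m (\<lambda>x. g i x - f x)" by (simp add: sqint_def)
      have "ennreal (nr m (\<lambda>x. g i x - f x)) \<le> ennreal e" using le nn_nr[OF sqf] by simp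
      hence "nr m (\<lambda>x. g i x - f x) \<le> e" using e by simp
      with sqf show ?thesis by simp
    qed
    thus ?thesis by blast
  qed
  obtain N1 where N1: "\<And>i. i \<ge> N1 \<Longrightarrow> sqint m (\<lambda>x. g i x - f x)" using P[of 1] by auto
  have "sqint m (\<lambda>x. g N1 x + -1 * (g N1 x - f x))"
    by (rule sqint_add[OF sq sqint_smul[OF N1]]) simp
  moreover have "(\<lambda>x. g N1 x + -1 * (g N1 x - f x)) = f" by auto
  ultimately have sqf: "sqint m f" by simp
  have "(\<lambda>k. nr m (\<lambda>x. g k x - f x)) \<longlonglongrightarrow> 0"
  proof (rule LIMSEQ_I)
    fix r :: real assume r: "0 < r"
    obtain Ne where "\<forall>i\<ge>Ne. sqint m (\<lambda>x. g i x - f x) \<and> nr m (\<lambda>x. g i x - f x) \<le> r / 2"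
      using P[of "r/2"] r by auto
    hence "\<forall>i\<ge>Ne. norm (nr m (\<lambda>x. g i x - f x) - 0) < r" using r nr_nonneg by fastforce
    thus "\<exists>no. \<forall>n\<ge>no. norm (nr m (\<lambda>x. g n x - f x) - 0) < r" by blast
  qed
  with sqf show ?thesis by blast
qed


lemma complete:
  "\<forall>s :: nat \<Rightarrow> L2super. (\<forall>k. s k \<in> L2s m n) \<and>
        (\<forall>e>0. \<exists>N. \<forall>i j. i \<ge> N \<longrightarrow> j \<ge> N \<longrightarrow>
            sqrt (Re (L2ip m n (L2add m (s i) (L2smul m (-1) (s j))) (L2J m n (L2add m (s i) (L2smul m (-1) (s j)))))) < e)
        \<longrightarrow> (\<exists>l\<in>L2s m n. (\<lambda>k. sqrt (Re (L2ip m n (L2add m (s k) (L2smul m (-1) l)) (L2J m n (L2add m (s k) (L2smul m (-1) l))))))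
                      \<longlonglongrightarrow> 0)"
proof (intro allI impI, elim conjE)
  fix s :: "nat \<Rightarrow> L2super"
  assume sV: "\<forall>k. s k \<in> L2s m n"
    and Cs: "\<forall>e>0. \<exists>N. \<forall>i j. i \<ge> N \<longrightarrow> j \<ge> N \<longrightarrow>
            sqrt (Re (L2ip m n (L2add m (s i) (L2smul m (-1) (s j))) (L2J m n (L2add m (s i) (L2smul m (-1) (s j)))))) < e"
  let ?U = "{1..n}"
  have CI: "\<exists>N. \<forall>i j. i \<ge> N \<longrightarrow> j \<ge> N \<longrightarrow> nr m (\<lambda>x. rep (s i I) x - rep (s j I) x) < e"
    if I: "I \<in> Pow ?U" and e: "e > 0" for I e
  proof -
    obtain N where N: "\<And>i j. i \<ge> N \<Longrightarrow> j \<ge> N \<Longrightarrow>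
            sqrt (Re (L2ip m n (L2add m (s i) (L2smul m (-1) (s j))) (L2J m n (L2add m (s i) (L2smul m (-1) (s j)))))) < sqrt e"
      using Cs e by (meson real_sqrt_gt_zero)
    have "nr m (\<lambda>x. rep (s i I) x - rep (s j I) x) < e" if "i \<ge> N" "j \<ge> N" for i j
    proof -
      have "sqrt (\<Sum>J\<in>Pow ?U. nr m (\<lambda>t. rep (s i J) t - rep (s j J) t)) < sqrt e"
        using N[OF that] by (simp only: dist_formula[OF sV[rule_format] sV[rule_format]])
      hence "(\<Sum>J\<in>Pow ?U. nr m (\<lambda>t. rep (s i J) t - rep (s j J) t)) < e" by simp
      moreover have "nr m (\<lambda>x. rep (s i I) x - rep (s j I) x) \<le> (\<Sum>J\<in>Pow ?U. nr m (\<lambda>t. rep (s i J) t - rep (s j J) t))"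
        by (rule member_le_sum[OF I]) (auto simp: nr_nonneg)
      ultimately show ?thesis by linarith
    qed
    thus ?thesis by blast
  qed
  have "\<forall>I\<in>Pow ?U. \<exists>f. sqint m f \<and> (\<lambda>k. nr m (\<lambda>x. rep (s k I) x - f x)) \<longlonglongrightarrow> 0"
  proof
    fix I assume I: "I \<in> Pow ?U"
    show "\<exists>f. sqint m f \<and> (\<lambda>k. nr m (\<lambda>x. rep (s k I) x - f x)) \<longlonglongrightarrow> 0"
      by (rule RF[of m "\<lambda>k. rep (s k I)"]) (use CI[OF I] L2s_sq[OF sV[rule_format]] in auto)
  qed
  then obtain F where F: "\<forall>I\<in>Pow ?U. sqint m (F I) \<and> (\<lambda>k. nr m (\<lambda>x. rep (s k I) x - F I x)) \<longlonglongrightarrow> 0"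
    by (rule bchoice[elim_format]) blast
  define l where "l I = (if I \<subseteq> ?U then L2cls m (F I) else L2zero m I)" for I
  have lV: "l \<in> L2s m n" using F by (auto simp: L2s_def l_def L2cls_in)
  have eq: "Re (L2ip m n (L2add m (s k) (L2smul m (-1) l)) (L2J m n (L2add m (s k) (L2smul m (-1) l))))
     = (\<Sum>I\<in>Pow ?U. nr m (\<lambda>t. rep (s k I) t - F I t))" for k
  proof -
    have "Re (L2ip m n (L2add m (s k) (L2smul m (-1) l)) (L2J m n (L2add m (s k) (L2smul m (-1) l))))
      = (\<Sum>I\<in>Pow ?U. nr m (\<lambda>t. rep (s k I) t - rep (l I) t))"
      by (rule dist_formula[OF sV[rule_format] lV])
    also have "\<dots> = (\<Sum>I\<in>Pow ?U. nr m (\<lambda>t. rep (s k I) t - F I t))"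
    proof (rule sum.cong[OF refl], rule nr_cong)
      fix I assume I: "I \<in> Pow ?U"
      have sF: "sqint m (F I)" using F I by blast
      show "sqint m (\<lambda>t. rep (s k I) t - rep (l I) t)"
        using sqint_add[OF L2s_sq[OF sV[rule_format]] sqint_smul[OF L2s_sq[OF lV], of "-1"]] by simp
      show "sqint m (\<lambda>t. rep (s k I) t - F I t)"
        using sqint_add[OF L2s_sq[OF sV[rule_format]] sqint_smul[OF sF, of "-1"]] by simp
      have "AE t in Rm m. rep (l I) t = F I t" using I by (simp add: l_def rep_cls[OF sF])
      thus "AE t in Rm m. rep (s k I) t - rep (l I) t = rep (s k I) t - F I t"
        by eventually_elim simp
    qed
    finally show ?thesis .
  qed
  have "(\<lambda>k. sqrt (\<Sum>I\<in>Pow ?U. nr m (\<lambda>t. rep (s k I) t - F I t))) \<longlonglongrightarrow> sqrt 0"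
    by (intro tendsto_real_sqrt tendsto_null_sum) (use F in auto)
  hence "(\<lambda>k. sqrt (Re (L2ip m n (L2add m (s k) (L2smul m (-1) l)) (L2J m n (L2add m (s k) (L2smul m (-1) l))))))
     \<longlonglongrightarrow> 0" by (simp only: eq real_sqrt_zero)
  with lV show "\<exists>l\<in>L2s m n. (\<lambda>k. sqrt (Re (L2ip m n (L2add m (s k) (L2smul m (-1) l)) (L2J m n (L2add m (s k) (L2smul m (-1) l))))))
                      \<longlonglongrightarrow> 0" by blast
qed

lemma fund_sym: "fundamental_symmetry (L2s m n) (L2even m n) (L2odd m n) (L2zero m) (L2add m) (L2smul m)
           (L2ip m n) n (L2J m n)"
  unfolding fundamental_symmetry_def
proof (intro conjI)
  show "\<forall>x\<in>L2s m n. L2J m n x \<in> L2s m n" by (simp add: J_L2s)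
  show "\<forall>x\<in>L2s m n. \<forall>y\<in>L2s m n. L2J m n (L2add m x y) = L2add m (L2J m n x) (L2J m n y)" by (simp add: J_add)
  show "\<forall>c. \<forall>x\<in>L2s m n. L2J m n (L2smul m c x) = L2smul m c (L2J m n x)" by (simp add: J_smul)
  show "\<forall>d. \<forall>x\<in>hpart (L2even m n) (L2odd m n) d. L2J m n x \<in> hpart (L2even m n) (L2odd m n) (d + n)"
    by (simp add: J_hpart)
  show "\<forall>x\<in>L2even m n \<union> L2odd m n. L2J m n (L2J m n x) = L2smul m ((- 1) ^ ((n + 1) * deg (L2even m n) x)) x"
    using JJ by blast
  show "\<forall>x\<in>L2even m n \<union> L2odd m n. \<forall>y\<in>L2even m n \<union> L2odd m n. L2ip m n (L2J m n x) (L2J m n y) = L2ip m n x y"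
    using J_iso hom_L2s by blast
  show "\<forall>x\<in>L2s m n. \<forall>y\<in>L2s m n. cnj (L2ip m n x (L2J m n y)) = L2ip m n y (L2J m n x)"
    using herm by blast
  show "\<forall>x\<in>L2s m n. Im (L2ip m n x (L2J m n x)) = 0 \<and> 0 \<le> Re (L2ip m n x (L2J m n x)) \<and>
      (L2ip m n x (L2J m n x) = 0 \<longrightarrow> x = L2zero m)"
    using pos_def by blast
qed (rule complete)

theorem mainTheorem2:
  fixes m n :: nat
  shows "hilbert_superspace (L2s m n) (L2even m n) (L2odd m n) (L2zero m) (L2add m) (L2smul m)
           (L2ip m n) n
       \<and> fundamental_symmetry (L2s m n) (L2even m n) (L2odd m n) (L2zero m) (L2add m) (L2smul m)
           (L2ip m n) n (L2J m n)"
proof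
  show "fundamental_symmetry (L2s m n) (L2even m n) (L2odd m n) (L2zero m) (L2add m) (L2smul m)
           (L2ip m n) n (L2J m n)" by (rule fund_sym)
  show "hilbert_superspace (L2s m n) (L2even m n) (L2odd m n) (L2zero m) (L2add m) (L2smul m)
           (L2ip m n) n"
    unfolding hilbert_superspace_def
    using graded sesq ip_hom ip_superherm fund_sym by blast
qed

end
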